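(* Let $l:\mathbb{R}^n\times\mathbb{R}^m\times\mathbb{R}^d\to\mathbb{R}$ be $\ell_1$-smooth and $L_1$-Lipschitz continuous, let $\mathcal{Y}\subset\mathbb{R}^m$ be nonempty, closed, convex and bounded, and let $l(x,\cdot,z)$ be $\mu$-strongly concave on $\mathcal{Y}$ for every $(x,z)$. Fix an iteration $k$ with center $\widehat x^k\in\mathbb{R}^n$, radius $\delta_k\in(0,\delta_{\max}]$, an affine model with $\|\widehat B^{k,1}\|_F\le B$, and define $\mathcal{L}^k$, $\Phi^k$, $y^{k,*}$, $\widehat L_1=L_1(1+B)$, $\widehat\ell_1=\ell_1(1+B)^2$ as in the context. Let $y^{i,*}:\mathcal{B}(\widehat x^k,\delta_k)\to\mathcal{Y}$ be any map and put $g_k=\nabla_x\mathcal{L}^k(\widehat x^k,y^{i,*}(\widehat x^k))$. Assume $g_k\neq0$, $\nabla\Phi^k(\widehat x^k)\neq 0$, and that for some $\tilde\kappa_{dcp}>0$, $$\Phi^k(\widehat x^k)-\Phi^k(\widehat x^k+\tilde s^k)\ge\tilde\kappa_{dcp}\|\nabla\Phi^k(\widehat x^k)\|\min\{\delta_k,1\},\qquad \tilde s^k=-\delta_k\frac{\nabla\Phi^k(\widehat x^k)}{\|\nabla\Phi^k(\widehat x^k)\|}.$$ Suppose further that $\|y^{i,*}(x)-y^{k,*}(x)\|\le\epsilon$ for all $x\in\mathcal{B}(\widehat x^k,\delta_k)$, where $$\epsilon\le\min\Big\{\frac{\|g_k\|}{2\widehat\ell_1},\ \frac{\|\nabla\Phi^k(\widehat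 x^k)\|\,\|g_k\|\,\tilde\kappa_{dcp}}{8\widehat L_1\widehat\ell_1\max\{\delta_{\max},1\}},\ \frac{\|g_k\|\min\{\delta_k,1\}\tilde\kappa_{dcp}}{16\widehat L_1}\Big\}.$$ Then, with $s^k=-\delta_k g_k/\|g_k\|$ and $\kappa_{dcp}=\tilde\kappa_{dcp}/8$, $$\mathcal{L}^k(\widehat x^k,y^{i,*}(\widehat x^k))-\mathcal{L}^k(\widehat x^k+s^k,y^{i,*}(\widehat x^k+s^k))\ge\kappa_{dcp}\|g_k\|\min\{\delta_k,1\}.$$
   Context: Notation: $\mathcal{B}(x,\delta)=\{z:\|z-x\|\le\delta\}$. Given data points $x^1,\dots,x^{N_k}$ and observations $\omega^1,\dots,\omega^{N_k}\in\mathbb{R}^d$, affine coefficients $\widehat B^{k,1}\in\mathbb{R}^{n\times d}$, $\widehat B^{k,0}\in\mathbb{R}^{1\times d}$ (the least-squares fit of $\omega^i$ on $x^i$) and residuals $e^{k,i}=\omega^i-(\widehat B^{k,1})^\top x^i-(\widehat B^{k,0})^\top$, the local model is $m_k(x,e)=(\widehat B^{k,1})^\top x+(\widehat B^{k,0})^\top+e$, and $\mathcal{L}^k(x,y)=\frac1{N_k}\sum_{i=1}^{N_k}l(x,y,m_k(x,e^{k,i}))$, $\Phi^k(x)=\max_{y\in\mathcal{Y}}\mathcal{L}^k(x,y)$, $y^{k,*}(x)=\arg\max_{y\in\mathcal{Y}}\mathcal{L}^k(x,y)$ (unique by strong concavity). $\ell$-smooth means differentiable with $\ell$-Lipschitz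 gradient. *)

theory Defs
  imports "HOL-Analysis.Analysis"
begin

definition grad :: "('a::euclidean_space \<Rightarrow> real) \<Rightarrow> 'a \<Rightarrow> 'a" where
  "grad f x = (THE D. GDERIV f x :> D)"

definition smooth_with :: "real \<Rightarrow> ('a::euclidean_space \<Rightarrow> real) \<Rightarrow> bool" where
  "smooth_with ell f \<longleftrightarrow>
     (\<forall>x. f differentiable (at x)) \<and> (\<forall>x y. norm (grad f x - grad f y) \<le> ell * dist x y)"

definition strongly_concave_on :: "real \<Rightarrow> 'a::real_normed_vector set \<Rightarrow> ('a \<Rightarrow> real) \<Rightarrow> bool" where
  "strongly_concave_on mu Y f \<longleftrightarrow>
     (\<forall>y1\<in>Y. \<forall>y2\<in>Y. \<forall>t::real. 0 \<le> t \<and> t \<le> 1 \<longrightarrow>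
        f (t *\<^sub>R y1 + (1 - t) *\<^sub>R y2) \<ge> t * f y1 + (1 - t) * f y2 + mu / 2 * t * (1 - t) * (norm (y1 - y2))\<^sup>2)"

definition frob_norm :: "real^'d^'n \<Rightarrow> real" where
  "frob_norm A = sqrt (\<Sum>i\<in>UNIV. \<Sum>j\<in>UNIV. (A $ i $ j)\<^sup>2)"

definition ls_obj :: "nat \<Rightarrow> (nat \<Rightarrow> real^'n) \<Rightarrow> (nat \<Rightarrow> real^'d) \<Rightarrow> real^'d^'n \<Rightarrow> real^'d \<Rightarrow> real" where
  "ls_obj N xs om B1 B0 = (\<Sum>i<N. (norm (om i - transpose B1 *v xs i - B0))\<^sup>2)"

text \<open>Residuals e^{k,i}; B0 (a 1 x d row) is represented by the vector (B0)^T in R^d.\<close>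
definition resid :: "(nat \<Rightarrow> real^'n) \<Rightarrow> (nat \<Rightarrow> real^'d) \<Rightarrow> real^'d^'n \<Rightarrow> real^'d \<Rightarrow> nat \<Rightarrow> real^'d" where
  "resid xs om B1 B0 i = om i - transpose B1 *v xs i - B0"

definition mk :: "real^'d^'n \<Rightarrow> real^'d \<Rightarrow> real^'n \<Rightarrow> real^'d \<Rightarrow> real^'d" where
  "mk B1 B0 x e = transpose B1 *v x + B0 + e"

definition Lk :: "((real^'n) \<times> (real^'m) \<times> (real^'d) \<Rightarrow> real) \<Rightarrow> nat \<Rightarrow> (nat \<Rightarrow> real^'n) \<Rightarrow> (nat \<Rightarrow> real^'d)
    \<Rightarrow> real^'d^'n \<Rightarrow> real^'d \<Rightarrow> real^'n \<Rightarrow> real^'m \<Rightarrow> real" where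
  "Lk l N xs om B1 B0 x y = (1 / real N) * (\<Sum>i<N. l (x, y, mk B1 B0 x (resid xs om B1 B0 i)))"

definition Phik :: "((real^'n) \<times> (real^'m) \<times> (real^'d) \<Rightarrow> real) \<Rightarrow> nat \<Rightarrow> (nat \<Rightarrow> real^'n) \<Rightarrow> (nat \<Rightarrow> real^'d)
    \<Rightarrow> real^'d^'n \<Rightarrow> real^'d \<Rightarrow> (real^'m) set \<Rightarrow> real^'n \<Rightarrow> real" where
  "Phik l N xs om B1 B0 Y x = (SUP y\<in>Y. Lk l N xs om B1 B0 x y)"

definition ystar :: "((real^'n) \<times> (real^'m) \<times> (real^'d) \<Rightarrow> real) \<Rightarrow> nat \<Rightarrow> (nat \<Rightarrow> real^'n) \<Rightarrow> (nat \<Rightarrow> real^'d)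
    \<Rightarrow> real^'d^'n \<Rightarrow> real^'d \<Rightarrow> (real^'m) set \<Rightarrow> real^'n \<Rightarrow> real^'m" where
  "ystar l N xs om B1 B0 Y x =
     (THE y. y \<in> Y \<and> (\<forall>y'\<in>Y. Lk l N xs om B1 B0 x y' \<le> Lk l N xs om B1 B0 x y))"

end

theory Submission
  imports Defs
begin


lemma grad_unique:
  fixes f :: "'a::euclidean_space \<Rightarrow> real"
  assumes "GDERIV f x :> D" shows "grad f x = D"
proof -
  have u: "D2 = D" if "GDERIV f x :> D2" for D2
  proof -
    have "(\<lambda>h. inner h D2) = (\<lambda>h. inner h D)"
      using has_derivative_unique that assms unfolding gderiv_def by blast
    then have "inner (D2 - D) D2 = inner (D2 - D) D" by metis
    then have "inner (D2 - D) (D2 - D) = 0" by (simp add: inner_diff_right)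
    then show ?thesis by simp
  qed
  show ?thesis unfolding grad_def using assms u by (rule the_equality)
qed

lemma grad_exists:
  fixes f :: "'a::euclidean_space \<Rightarrow> real"
  assumes "f differentiable (at x)" shows "GDERIV f x :> grad f x"
proof -
  obtain f' where f': "(f has_derivative f') (at x)" using assms differentiable_def by blast
  then have lin: "linear f'" using has_derivative_linear by blast
  define D where "D = (\<Sum>b\<in>Basis. f' b *\<^sub>R b)"
  have "f' h = inner h D" for h
  proof -
    have "f' h = f' (\<Sum>b\<in>Basis. (h \<bullet> b) *\<^sub>R b)" by (simp add: euclidean_representation)
    also have "\<dots> = (\<Sum>b\<in>Basis. (h \<bullet> b) * f' b)"
      using lin by (simp add: linear_sum linear_scale)
    also have "\<dots> = inner h D" unfolding D_def by (simp add: inner_sum_right mult.commute)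
    finally show ?thesis .
  qed
  then have "f' = (\<lambda>h. inner h D)" by auto
  then have "GDERIV f x :> D" using f' unfolding gderiv_def by simp
  then show ?thesis using grad_unique[of f x D] by simp
qed

lemma taylor_bound:
  fixes f :: "'a::euclidean_space \<Rightarrow> real"
  assumes sm: "smooth_with ell f"
  shows "\<bar>f q - f p - inner (q - p) (grad f p)\<bar> \<le> ell * (norm (q - p))\<^sup>2"
proof -
  have gd: "\<And>x. (f has_derivative (\<lambda>h. inner h (grad f x))) (at x)"
    using grad_exists sm unfolding smooth_with_def gderiv_def by blast
  have L: "\<And>x y. norm (grad f x - grad f y) \<le> ell * dist x y" using sm unfolding smooth_with_def by blast
  obtain b :: 'a where b: "b \<in> Basis" using nonempty_Basis by blast
  have ell0: "0 \<le> ell"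
  proof -
    have "0 \<le> ell * dist b 0" using L[of b 0] norm_ge_zero order_trans by blast
    moreover have "dist b (0::'a) = 1" using b by simp
    ultimately show ?thesis by simp
  qed
  have P1: "p + t *\<^sub>R (q - p) \<in> closed_segment p q" if "t \<in> {0..1}" for t
  proof -
    have e: "p + t *\<^sub>R (q - p) = (1 - t) *\<^sub>R p + t *\<^sub>R q" by (simp add: algebra_simps)
    show ?thesis unfolding e in_segment(1) using that by auto
  qed
  have P2: "(f has_derivative (\<lambda>h. inner h (grad f x))) (at x within closed_segment p q)" for x
    by (metis gd has_derivative_subset subset_UNIV)
  have P3: "onorm ((\<lambda>h. inner h (grad f x)) - (\<lambda>h. inner h (grad f p))) \<le> ell * norm (q - p)"
    if x: "x \<in> closed_segment p q" for x
  proof -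
    have eq: "(\<lambda>h. inner h (grad f x)) - (\<lambda>h. inner h (grad f p)) = (\<lambda>h. inner h (grad f x - grad f p))"
      by (rule ext) (simp add: inner_diff_right)
    have "onorm (\<lambda>h. inner h (grad f x - grad f p)) \<le> norm (grad f x - grad f p)"
      by (rule onorm_bound) (auto simp: Cauchy_Schwarz_ineq2 mult.commute)
    moreover have "norm (grad f x - grad f p) \<le> ell * norm (q - p)"
    proof -
      have "dist x p \<le> norm (q - p)" using dist_in_closed_segment[OF x] by (simp add: dist_norm norm_minus_commute)
      then have "ell * dist x p \<le> ell * norm (q - p)" using ell0 by (rule mult_left_mono)
      then show ?thesis using L[of x p] by linarith
    qed
    ultimately have "onorm (\<lambda>h. inner h (grad f x - grad f p)) \<le> ell * norm (q - p)"
      by linarith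
    then show ?thesis using eq by simp
  qed
  have P4: "p \<in> closed_segment p q" by simp
  note R = differentiable_bound_linearization[of p q "closed_segment p q" f "\<lambda>x h. inner h (grad f x)" p "ell * norm (q - p)"]
  have "norm (f q - f p - inner (q - p) (grad f p)) \<le> norm (q - p) * (ell * norm (q - p))"
    apply (rule R)
    using P1 P2 P3 P4 by auto
  then show ?thesis by (simp add: power2_eq_square mult_ac)
qed

lemma mat_vec_norm:
  fixes A :: "real^'d^'n" and v :: "real^'d"
  shows "norm (A *v v) \<le> frob_norm A * norm v"
proof -
  have c: "(A *v v) $ i = inner (A $ i) v" for i
    by (simp add: matrix_vector_mult_def inner_vec_def mult.commute)
  have "(norm (A *v v))\<^sup>2 = (\<Sum>i\<in>UNIV. ((A *v v) $ i) * ((A *v v) $ i))"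
    unfolding power2_norm_eq_inner inner_vec_def by simp
  also have "\<dots> = (\<Sum>i\<in>UNIV. (inner (A $ i) v)\<^sup>2)"
    by (simp only: c power2_eq_square)
  also have "\<dots> \<le> (\<Sum>i\<in>UNIV. (norm (A $ i))\<^sup>2 * (norm v)\<^sup>2)"
  proof (rule sum_mono)
    fix i
    have "\<bar>inner (A $ i) v\<bar> \<le> norm (A $ i) * norm v" by (rule Cauchy_Schwarz_ineq2)
    then have "\<bar>inner (A $ i) v\<bar>\<^sup>2 \<le> (norm (A $ i) * norm v)\<^sup>2"
      by (rule power_mono) simp
    then show "(inner (A $ i) v)\<^sup>2 \<le> (norm (A $ i))\<^sup>2 * (norm v)\<^sup>2"
      by (simp add: power_mult_distrib)
  qed
  also have "\<dots> = (frob_norm A)\<^sup>2 * (norm v)\<^sup>2"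
  proof -
    have "(norm (A $ i))\<^sup>2 = (\<Sum>j\<in>UNIV. (A $ i $ j)\<^sup>2)" for i
      unfolding power2_norm_eq_inner inner_vec_def by (simp add: power2_eq_square)
    moreover have "(frob_norm A)\<^sup>2 = (\<Sum>i\<in>UNIV. \<Sum>j\<in>UNIV. (A $ i $ j)\<^sup>2)"
      unfolding frob_norm_def by (auto intro!: sum_nonneg)
    ultimately show ?thesis by (simp add: sum_distrib_right)
  qed
  also have "\<dots> = (frob_norm A * norm v)\<^sup>2" by (simp add: power_mult_distrib)
  finally have "(norm (A *v v))\<^sup>2 \<le> (frob_norm A * norm v)\<^sup>2" .
  moreover have "0 \<le> frob_norm A" unfolding frob_norm_def by (intro real_sqrt_ge_zero sum_nonneg) simp
  ultimately show ?thesis by (meson norm_ge_zero mult_nonneg_nonneg power2_le_imp_le)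
qed

lemma frob_transpose: "frob_norm (transpose A) = frob_norm (A :: real^'d^'n)"
proof -
  have "(\<Sum>i\<in>UNIV. \<Sum>j\<in>UNIV. (transpose A $ i $ j)\<^sup>2) = (\<Sum>i\<in>UNIV. \<Sum>j\<in>UNIV. (A $ j $ i)\<^sup>2)"
    by (simp add: transpose_def)
  also have "\<dots> = (\<Sum>j\<in>UNIV. \<Sum>i\<in>UNIV. (A $ j $ i)\<^sup>2)" by (rule sum.swap)
  finally show ?thesis unfolding frob_norm_def by simp
qed

lemma frob_nonneg: "0 \<le> frob_norm A"
  unfolding frob_norm_def by (intro real_sqrt_ge_zero sum_nonneg) simp

lemma gderiv_of_bound:
  fixes f :: "'a::euclidean_space \<Rightarrow> real"
  assumes b: "\<And>h. \<bar>f (x + h) - f x - inner h G\<bar> \<le> norm h * r h"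
    and r: "(r \<longlongrightarrow> 0) (at 0)"
  shows "GDERIV f x :> G"
  unfolding gderiv_def has_derivative_at
proof (intro conjI)
  show "bounded_linear (\<lambda>h. inner h G)" by (rule bounded_linear_inner_left)
  show "((\<lambda>h. norm (f (x + h) - f x - inner h G) / norm h) \<longlongrightarrow> 0) (at 0)"
  proof (rule Lim_null_comparison)
    show "\<forall>\<^sub>F h in at 0. norm (norm (f (x + h) - f x - inner h G) / norm h) \<le> \<bar>r h\<bar>"
    proof (rule always_eventually, rule allI)
      fix h :: 'a
      show "norm (norm (f (x + h) - f x - inner h G) / norm h) \<le> \<bar>r h\<bar>"
      proof (cases "h = 0")
        case True then show ?thesis by simp
      next
        case False
        then have "0 < norm h" by simp
        have "\<bar>f (x + h) - f x - inner h G\<bar> \<le> norm h * \<bar>r h\<bar>"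
          using b[of h] mult_left_mono[OF abs_ge_self[of "r h"] norm_ge_zero[of h]] by linarith
        then show ?thesis using \<open>0 < norm h\<close> by (simp add: divide_le_eq mult.commute)
      qed
    qed
    show "((\<lambda>h. \<bar>r h\<bar>) \<longlongrightarrow> 0) (at 0)" using tendsto_rabs_zero[OF r] .
  qed
qed

lemma unit_diff:
  fixes a b :: "'a::real_normed_vector"
  assumes "a \<noteq> 0" "b \<noteq> 0"
  shows "norm ((1 / norm a) *\<^sub>R a - (1 / norm b) *\<^sub>R b) \<le> 2 * norm (a - b) / norm b"
proof -
  have na: "norm a > 0" and nb: "norm b > 0" using assms by auto
  have "(1 / norm a) *\<^sub>R a - (1 / norm b) *\<^sub>R b = ((1 / norm a) *\<^sub>R a - (1 / norm b) *\<^sub>R a) + (1 / norm b) *\<^sub>R (a - b)"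
    by (simp add: algebra_simps)
  then have "norm ((1 / norm a) *\<^sub>R a - (1 / norm b) *\<^sub>R b) \<le> norm ((1 / norm a - 1 / norm b) *\<^sub>R a) + norm ((1 / norm b) *\<^sub>R (a - b))"
    by (metis norm_triangle_ineq scaleR_diff_left)
  also have "norm ((1 / norm a - 1 / norm b) *\<^sub>R a) = \<bar>norm b - norm a\<bar> / norm b"
  proof -
    have e: "1 / norm a - 1 / norm b = (norm b - norm a) / (norm a * norm b)"
      using na nb by (simp add: diff_divide_distrib)
    have "norm ((1 / norm a - 1 / norm b) *\<^sub>R a) = \<bar>1 / norm a - 1 / norm b\<bar> * norm a" by simp
    also have "\<dots> = \<bar>norm b - norm a\<bar> / (norm a * norm b) * norm a"
      unfolding e using na nb by (simp add: abs_div)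
    also have "\<dots> = \<bar>norm b - norm a\<bar> / norm b" using na by simp
    finally show ?thesis .
  qed
  also have "\<dots> \<le> norm (a - b) / norm b"
    using nb norm_triangle_ineq3[of a b] by (simp add: divide_right_mono abs_minus_commute)
  also have "norm ((1 / norm b) *\<^sub>R (a - b)) = norm (a - b) / norm b" using nb by simp
  finally show ?thesis by simp
qed

lemma smooth_nonneg:
  fixes f :: "'a::euclidean_space \<Rightarrow> real"
  assumes sm: "smooth_with ell f" shows "0 \<le> ell"
proof -
  have L: "\<And>x y. norm (grad f x - grad f y) \<le> ell * dist x y" using sm unfolding smooth_with_def by blast
  obtain b :: 'a where b: "b \<in> Basis" using nonempty_Basis by blast
  have "0 \<le> ell * dist b 0" using L[of b 0] norm_ge_zero order_trans by blast
  moreover have "dist b (0::'a) = 1" using b by simp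
  ultimately show ?thesis by simp
qed

lemma avg_abs_le:
  fixes a :: "nat \<Rightarrow> real"
  assumes N: "N > 0" and b: "\<And>i. i < N \<Longrightarrow> \<bar>a i\<bar> \<le> c"
  shows "\<bar>(1 / real N) * (\<Sum>i<N. a i)\<bar> \<le> c"
proof -
  have "\<bar>\<Sum>i<N. a i\<bar> \<le> (\<Sum>i<N. \<bar>a i\<bar>)" by (rule sum_abs)
  also have "\<dots> \<le> of_nat (card {..<N}) * c" by (rule sum_bounded_above) (use b in auto)
  finally have "\<bar>\<Sum>i<N. a i\<bar> \<le> real N * c" by simp
  then show ?thesis using N by (simp add: abs_mult field_simps)
qed

lemma avg_norm_le:
  fixes a :: "nat \<Rightarrow> 'a::real_normed_vector"
  assumes N: "N > 0" and b: "\<And>i. i < N \<Longrightarrow> norm (a i) \<le> c"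
  shows "norm ((1 / real N) *\<^sub>R (\<Sum>i<N. a i)) \<le> c"
proof -
  have "norm (\<Sum>i<N. a i) \<le> (\<Sum>i<N. norm (a i))" by (rule norm_sum)
  also have "\<dots> \<le> of_nat (card {..<N}) * c" by (rule sum_bounded_above) (use b in auto)
  finally have "norm (\<Sum>i<N. a i) \<le> real N * c" by simp
  then show ?thesis using N by (simp add: field_simps)
qed

lemma lin_aux: "(a::real) \<le> c \<Longrightarrow> (b + c)/2 + D/8 \<le> a \<Longrightarrow> D/4 \<le> c - b"
  unfolding add_divide_distrib by linarith

lemma fin_aux:
  fixes N1 K P0 E La Ls Ps Pst X Yv :: real
  assumes "N1 \<le> K" "P0 - E \<le> La" "Ls \<le> Ps" "Ps \<le> Pst + N1" "X \<le> P0 - Pst"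
    "K \<le> X / 4" "E \<le> Yv / 16" "Yv / 2 \<le> X" "0 \<le> Yv"
  shows "Yv / 8 \<le> La - Ls"
  using assms by linarith


theorem lemma2:
  fixes l :: "(real^'n) \<times> (real^'m) \<times> (real^'d) \<Rightarrow> real"
    and ell1 L1 mu B delta_k delta_max kt eps :: real
    and Y :: "(real^'m) set"
    and N :: nat and xs :: "nat \<Rightarrow> real^'n" and om :: "nat \<Rightarrow> real^'d"
    and B1 :: "real^'d^'n" and B0 :: "real^'d"
    and xhat :: "real^'n" and yi :: "real^'n \<Rightarrow> real^'m"
  defines "L \<equiv> Lk l N xs om B1 B0"
    and "Phi \<equiv> Phik l N xs om B1 B0 Y"
    and "ys \<equiv> ystar l N xs om B1 B0 Y"
    and "Lhat \<equiv> L1 * (1 + B)"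
    and "ellhat \<equiv> ell1 * (1 + B)\<^sup>2"
    and "g \<equiv> grad (\<lambda>x. Lk l N xs om B1 B0 x (yi xhat)) xhat"
  assumes smooth: "smooth_with ell1 l"
    and lip: "L1-lipschitz_on UNIV l"
    and Y_ne: "Y \<noteq> {}" and Y_closed: "closed Y" and Y_convex: "convex Y" and Y_bounded: "bounded Y"
    and mu_pos: "mu > 0"
    and sconc: "\<And>x z. strongly_concave_on mu Y (\<lambda>y. l (x, y, z))"
    and N_pos: "N > 0"
    and lsq: "\<And>C1 C0. ls_obj N xs om B1 B0 \<le> ls_obj N xs om C1 C0"
    and delta: "0 < delta_k" "delta_k \<le> delta_max"
    and B1_bound: "frob_norm B1 \<le> B"
    and yi_maps: "\<And>x. x \<in> cball xhat delta_k \<Longrightarrow> yi x \<in> Y"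
    and g_ne: "g \<noteq> 0"
    and gPhi_ne: "grad Phi xhat \<noteq> 0"
    and kt_pos: "kt > 0"
    and dcp: "Phi xhat - Phi (xhat + (- (delta_k / norm (grad Phi xhat)) *\<^sub>R grad Phi xhat))
              \<ge> kt * norm (grad Phi xhat) * min delta_k 1"
    and yi_close: "\<And>x. x \<in> cball xhat delta_k \<Longrightarrow> norm (yi x - ys x) \<le> eps"
    and eps1: "eps * (2 * ellhat) \<le> norm g"
    and eps2: "eps * (8 * Lhat * ellhat * max delta_max 1) \<le> norm (grad Phi xhat) * norm g * kt"
    and eps3: "eps * (16 * Lhat) \<le> norm g * min delta_k 1 * kt"
  shows "L xhat (yi xhat) - L (xhat + (- (delta_k / norm g)) *\<^sub>R g)
            (yi (xhat + (- (delta_k / norm g)) *\<^sub>R g))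
         \<ge> (kt / 8) * norm g * min delta_k 1"
proof -
  define e where "e i = resid xs om B1 B0 i" for i
  define P where "P i x y = (x, y, mk B1 B0 x (e i))" for i and x :: "real^'n" and y :: "real^'m"
  define Gv :: "real^'n \<Rightarrow> real^'m \<Rightarrow> real^'n" where "Gv x y = (1 / real N) *\<^sub>R (\<Sum>i<N. fst (grad l (P i x y)) + B1 *v snd (snd (grad l (P i x y))))" for x y
  have Lform: "L x y = (1 / real N) * (\<Sum>i<N. l (P i x y))" for x y
    unfolding L_def Lk_def P_def e_def by simp
  have B0: "0 \<le> B" using frob_nonneg[of B1] B1_bound by linarith
  have L10: "0 \<le> L1" using lipschitz_on_nonneg[OF lip] .
  have ell0: "0 \<le> ell1" using smooth_nonneg[OF smooth] .
  have Lhat0: "0 \<le> Lhat" unfolding Lhat_def using B0 L10 by simp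
  have L1Lhat: "L1 \<le> Lhat" unfolding Lhat_def using B0 L10 by (simp add: algebra_simps)
  have ellhat0: "0 \<le> ellhat" unfolding ellhat_def using ell0 by simp
  have ell_le: "ell1 * (1 + B) \<le> ellhat" unfolding ellhat_def using ell0 B0
    by (simp add: power2_eq_square mult_left_mono)
  have Npos: "real N > 0" using N_pos by simp
  have tr: "norm (transpose B1 *v h) \<le> B * norm h" for h
    using mat_vec_norm[of "transpose B1" h] frob_transpose[of B1] B1_bound
    by (metis mult_right_mono norm_ge_zero order_trans)
  have mv: "norm (B1 *v c) \<le> B * norm c" for c
    using mat_vec_norm[of B1 c] B1_bound by (metis mult_right_mono norm_ge_zero order_trans)
  have T: "\<bar>L (x + h) y - L x y - inner h (Gv x y)\<bar> \<le> ellhat * (norm h)\<^sup>2" for x h y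
  proof -
    have ti: "\<bar>l (P i (x + h) y) - l (P i x y) - inner h (fst (grad l (P i x y)) + B1 *v snd (snd (grad l (P i x y))))\<bar>
              \<le> ellhat * (norm h)\<^sup>2" for i
    proof -
      define p where "p = P i x y"
      define q where "q = P i (x + h) y"
      obtain a b c where abc: "grad l p = (a, b, c)" by (metis prod.collapse)
      have qp: "q - p = (h, 0, transpose B1 *v h)"
        unfolding p_def q_def P_def mk_def by (simp add: matrix_vector_right_distrib)
      have ip: "inner (q - p) (grad l p) = inner h (a + B1 *v c)"
        unfolding qp abc by (simp add: inner_add_right dot_lmul_matrix)
      have "(norm (q - p))\<^sup>2 = (norm h)\<^sup>2 + (norm (transpose B1 *v h))\<^sup>2"
        unfolding qp by (simp add: norm_Pair)
      also have "\<dots> \<le> (norm h)\<^sup>2 + (B * norm h)\<^sup>2"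
        using tr[of h] by (simp add: power_mono)
      also have "\<dots> \<le> ((1 + B) * norm h)\<^sup>2"
        using B0 by (simp add: power2_eq_square algebra_simps)
      finally have nq: "(norm (q - p))\<^sup>2 \<le> (1 + B)\<^sup>2 * (norm h)\<^sup>2" by (simp add: power_mult_distrib)
      have "\<bar>l q - l p - inner (q - p) (grad l p)\<bar> \<le> ell1 * (norm (q - p))\<^sup>2"
        by (rule taylor_bound[OF smooth])
      also have "\<dots> \<le> ell1 * ((1 + B)\<^sup>2 * (norm h)\<^sup>2)" using nq ell0 by (rule mult_left_mono)
      finally show ?thesis unfolding ip using abc unfolding p_def q_def ellhat_def by (simp add: mult_ac)
    qed
    have "L (x + h) y - L x y - inner h (Gv x y)
          = (1 / real N) * (\<Sum>i<N. l (P i (x + h) y) - l (P i x y) - inner h (fst (grad l (P i x y)) + B1 *v snd (snd (grad l (P i x y)))))"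
      unfolding Lform Gv_def by (simp add: inner_sum_right sum_subtractf right_diff_distrib)
    also have "\<bar>\<dots>\<bar> \<le> ellhat * (norm h)\<^sup>2"
      by (rule avg_abs_le[OF N_pos ti])
    finally show ?thesis .
  qed
  have Gl: "norm (Gv x y1 - Gv x y2) \<le> ellhat * norm (y1 - y2)" for x y1 y2
  proof -
    have ti: "norm ((fst (grad l (P i x y1)) + B1 *v snd (snd (grad l (P i x y1))))
                - (fst (grad l (P i x y2)) + B1 *v snd (snd (grad l (P i x y2))))) \<le> ellhat * norm (y1 - y2)" for i
    proof -
      define z where "z = grad l (P i x y1) - grad l (P i x y2)"
      have eq: "(fst (grad l (P i x y1)) + B1 *v snd (snd (grad l (P i x y1))))
                - (fst (grad l (P i x y2)) + B1 *v snd (snd (grad l (P i x y2))))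
               = fst z + B1 *v snd (snd z)"
        unfolding z_def by (simp add: matrix_vector_right_distrib algebra_simps)
      have n1: "norm (fst z) \<le> norm z" using norm_fst_le[of "fst z" "snd z"] by simp
      have n2: "norm (snd (snd z)) \<le> norm z"
        using norm_snd_le[of "snd z" "fst z"] norm_snd_le[of "snd (snd z)" "fst (snd z)"] by simp
      have "norm (fst z + B1 *v snd (snd z)) \<le> norm (fst z) + B * norm (snd (snd z))"
        using norm_triangle_ineq[of "fst z" "B1 *v snd (snd z)"] mv[of "snd (snd z)"] by linarith
      also have "\<dots> \<le> (1 + B) * norm z"
        using n1 n2 B0 mult_left_mono[OF n2 B0] by (simp add: algebra_simps)
      also have "norm z \<le> ell1 * dist (P i x y1) (P i x y2)"
        using smooth unfolding smooth_with_def z_def by blast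
      also have "dist (P i x y1) (P i x y2) = norm (y1 - y2)"
        unfolding P_def dist_norm by (simp add: norm_Pair)
      finally have "norm (fst z + B1 *v snd (snd z)) \<le> (1 + B) * (ell1 * norm (y1 - y2))"
        using B0 by (simp add: mult_left_mono)
      also have "\<dots> = (ell1 * (1 + B)) * norm (y1 - y2)" by (simp add: mult_ac)
      also have "\<dots> \<le> ellhat * norm (y1 - y2)" using ell_le by (simp add: mult_right_mono)
      finally show ?thesis unfolding eq .
    qed
    have "Gv x y1 - Gv x y2 = (1 / real N) *\<^sub>R (\<Sum>i<N. (fst (grad l (P i x y1)) + B1 *v snd (snd (grad l (P i x y1))))
                - (fst (grad l (P i x y2)) + B1 *v snd (snd (grad l (P i x y2)))))"
      unfolding Gv_def by (simp add: sum_subtractf scaleR_diff_right)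
    also have "norm \<dots> \<le> ellhat * norm (y1 - y2)" by (rule avg_norm_le[OF N_pos ti])
    finally show ?thesis .
  qed
  have Lip: "\<bar>L x y - L x' y'\<bar> \<le> Lhat * norm (x - x') + L1 * norm (y - y')" for x y x' y'
  proof -
    have ti: "\<bar>l (P i x y) - l (P i x' y')\<bar> \<le> Lhat * norm (x - x') + L1 * norm (y - y')" for i
    proof -
      have d: "P i x y - P i x' y' = (x - x', y - y', transpose B1 *v (x - x'))"
        unfolding P_def mk_def by (simp add: matrix_vector_right_distrib algebra_simps)
      have "norm (P i x y - P i x' y') \<le> norm (x - x') + (norm (y - y') + norm (transpose B1 *v (x - x')))"
        unfolding d by (meson add_left_mono norm_Pair_le order_trans)
      also have "\<dots> \<le> (1 + B) * norm (x - x') + norm (y - y')"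
        using tr[of "x - x'"] by (simp add: algebra_simps)
      finally have dn: "norm (P i x y - P i x' y') \<le> (1 + B) * norm (x - x') + norm (y - y')" .
      have "\<bar>l (P i x y) - l (P i x' y')\<bar> \<le> L1 * norm (P i x y - P i x' y')"
        using lipschitz_on_normD[OF lip, of "P i x y" "P i x' y'"] by simp
      also have "\<dots> \<le> L1 * ((1 + B) * norm (x - x') + norm (y - y'))" using dn L10 by (rule mult_left_mono)
      finally show ?thesis unfolding Lhat_def by (simp add: algebra_simps)
    qed
    have "L x y - L x' y' = (1 / real N) * (\<Sum>i<N. l (P i x y) - l (P i x' y'))"
      unfolding Lform by (simp add: sum_subtractf right_diff_distrib)
    also have "\<bar>\<dots>\<bar> \<le> Lhat * norm (x - x') + L1 * norm (y - y')" by (rule avg_abs_le[OF N_pos ti])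
    finally show ?thesis .
  qed
  have SC: "L x ((1/2) *\<^sub>R y1 + (1/2) *\<^sub>R y2) \<ge> (L x y1 + L x y2) / 2 + mu / 8 * (norm (y1 - y2))\<^sup>2"
    if "y1 \<in> Y" "y2 \<in> Y" for x y1 y2
  proof -
    have ti: "l (P i x ((1/2) *\<^sub>R y1 + (1/2) *\<^sub>R y2)) \<ge> (1/2) * l (P i x y1) + (1/2) * l (P i x y2) + mu / 8 * (norm (y1 - y2))\<^sup>2" for i
    proof -
      have H: "strongly_concave_on mu Y (\<lambda>y. l (x, y, mk B1 B0 x (e i)))" by (rule sconc)
      have "l (x, (1/2) *\<^sub>R y1 + (1 - 1/2) *\<^sub>R y2, mk B1 B0 x (e i)) \<ge>
         (1/2) * l (x, y1, mk B1 B0 x (e i)) + (1 - 1/2) * l (x, y2, mk B1 B0 x (e i)) + mu / 2 * (1/2) * (1 - 1/2) * (norm (y1 - y2))\<^sup>2"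
        using H[unfolded strongly_concave_on_def, rule_format, of y1 y2 "1/2"] that by simp
      then show ?thesis unfolding P_def by (simp add: field_simps)
    qed
    have "(\<Sum>i<N. (1/2) * l (P i x y1) + (1/2) * l (P i x y2) + mu / 8 * (norm (y1 - y2))\<^sup>2)
          \<le> (\<Sum>i<N. l (P i x ((1/2) *\<^sub>R y1 + (1/2) *\<^sub>R y2)))"
      by (rule sum_mono) (rule ti)
    then have "(1/2) * (\<Sum>i<N. l (P i x y1)) + (1/2) * (\<Sum>i<N. l (P i x y2)) + real N * (mu / 8 * (norm (y1 - y2))\<^sup>2)
          \<le> (\<Sum>i<N. l (P i x ((1/2) *\<^sub>R y1 + (1/2) *\<^sub>R y2)))"
      by (simp add: sum.distrib sum_distrib_left)
    then have "(1 / real N) * ((1/2) * (\<Sum>i<N. l (P i x y1)) + (1/2) * (\<Sum>i<N. l (P i x y2)) + real N * (mu / 8 * (norm (y1 - y2))\<^sup>2))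
          \<le> (1 / real N) * (\<Sum>i<N. l (P i x ((1/2) *\<^sub>R y1 + (1/2) *\<^sub>R y2)))"
      using Npos by (intro mult_left_mono) simp_all
    then show ?thesis unfolding Lform using Npos by (simp add: field_simps)
  qed
  have QG: "L x z - L x y \<ge> mu / 4 * (norm (y - z))\<^sup>2"
    if "y \<in> Y" "z \<in> Y" "\<forall>y'\<in>Y. L x y' \<le> L x z" for x y z
  proof -
    have "(1/2) *\<^sub>R y + (1/2) *\<^sub>R z \<in> Y"
      using Y_convex[unfolded convex_def, rule_format, of y z "1/2" "1/2"] that(1,2) by simp
    then have "L x ((1/2) *\<^sub>R y + (1/2) *\<^sub>R z) \<le> L x z" using that(3) by blast
    moreover have "L x ((1/2) *\<^sub>R y + (1/2) *\<^sub>R z) \<ge> (L x y + L x z) / 2 + (mu * (norm (y - z))\<^sup>2) / 8"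
      using SC[OF that(1,2), of x] by (simp only: times_divide_eq_left)
    ultimately have "(mu * (norm (y - z))\<^sup>2) / 4 \<le> L x z - L x y"
      by (rule lin_aux)
    then show ?thesis by (simp only: times_divide_eq_left)
  qed
  have YS: "ys x \<in> Y \<and> (\<forall>y\<in>Y. L x y \<le> L x (ys x))" for x
  proof -
    have "L1-lipschitz_on Y (L x)"
    proof (rule lipschitz_onI)
      fix y y' assume "y \<in> Y" "y' \<in> Y"
      show "dist (L x y) (L x y') \<le> L1 * dist y y'"
        using Lip[of x y x y'] by (simp add: dist_norm dist_real_def)
    qed (rule L10)
    then have cont: "continuous_on Y (L x)" by (rule lipschitz_on_continuous_on)
    have cpt: "compact Y" using Y_closed Y_bounded compact_eq_bounded_closed by blast
    obtain z where z: "z \<in> Y" "\<forall>y\<in>Y. L x y \<le> L x z"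
      using continuous_attains_sup[OF cpt Y_ne cont] by blast
    have uniq: "w = z" if "w \<in> Y" "\<forall>y\<in>Y. L x y \<le> L x w" for w
    proof -
      have "L x z - L x w \<ge> mu / 4 * (norm (w - z))\<^sup>2" using QG[of w z x] that z by blast
      moreover have "L x z \<le> L x w" using that z by blast
      ultimately have "mu / 4 * (norm (w - z))\<^sup>2 \<le> 0" by linarith
      moreover have "mu / 4 > 0" using mu_pos by simp
      ultimately have "(norm (w - z))\<^sup>2 \<le> 0" by (simp add: mult_le_0_iff)
      then show ?thesis by simp
    qed
    have "ys x = z"
      unfolding ys_def ystar_def L_def[symmetric]
    proof (rule the_equality)
      show "z \<in> Y \<and> (\<forall>y'\<in>Y. L x y' \<le> L x z)" using z by blast
      show "w = z" if "w \<in> Y \<and> (\<forall>y'\<in>Y. L x y' \<le> L x w)" for w using uniq that by blast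
    qed
    then show ?thesis using z by simp
  qed
  have PhiEq: "Phi x = L x (ys x)" for x
  proof -
    have "Phi x = Sup ((\<lambda>y. L x y) ` Y)" unfolding Phi_def Phik_def L_def by simp
    also have "\<dots> = L x (ys x)"
      by (rule cSup_eq_maximum) (use YS[of x] in auto)
    finally show ?thesis .
  qed
  have PhiLip: "\<bar>Phi a - Phi b\<bar> \<le> Lhat * norm (a - b)" for a b
  proof -
    have one: "Phi u - Phi v \<le> Lhat * norm (u - v)" for u v
    proof -
      have "Phi v = L v (ys v)" by (rule PhiEq)
      also have "\<dots> \<ge> L v (ys u)" using YS[of v] YS[of u] by blast
      finally have a: "L v (ys u) \<le> Phi v" .
      have "\<bar>L u (ys u) - L v (ys u)\<bar> \<le> Lhat * norm (u - v) + L1 * norm (ys u - ys u)" by (rule Lip)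
      then have "L u (ys u) - L v (ys u) \<le> Lhat * norm (u - v)" by simp
      then show ?thesis using a PhiEq[of u] by linarith
    qed
    show ?thesis using one[of a b] one[of b a] by (simp add: norm_minus_commute abs_le_iff)
  qed
  have GD: "GDERIV (\<lambda>x. L x y) x :> Gv x y" for x y
  proof (rule gderiv_of_bound[where r="\<lambda>h. ellhat * norm h"])
    fix h
    show "\<bar>L (x + h) y - L x y - inner h (Gv x y)\<bar> \<le> norm h * (ellhat * norm h)"
      using T[of x h y] by (simp add: power2_eq_square mult_ac)
  next
    have "((\<lambda>h. norm h) \<longlongrightarrow> 0) (at (0::real^'n))"
      using tendsto_norm_zero[OF tendsto_ident_at[of "0::real^'n" UNIV]] by simp
    then show "((\<lambda>h. ellhat * norm h) \<longlongrightarrow> 0) (at (0::real^'n))" by (rule tendsto_mult_right_zero)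
  qed
  have Dk: "GDERIV Phi xhat :> Gv xhat (ys xhat)"
  proof (rule gderiv_of_bound[where r="\<lambda>h. ellhat * norm h + ellhat * sqrt (8 * Lhat * norm h / mu)"])
    fix h :: "real^'n"
    define y0 where "y0 = ys xhat"
    define yh where "yh = ys (xhat + h)"
    define G0 where "G0 = Gv xhat y0"
    have y0Y: "y0 \<in> Y" and y0m: "\<forall>y\<in>Y. L xhat y \<le> L xhat y0" using YS[of xhat] unfolding y0_def by auto
    have yhY: "yh \<in> Y" and yhm: "\<forall>y\<in>Y. L (xhat + h) y \<le> L (xhat + h) yh" using YS[of "xhat + h"] unfolding yh_def by auto
    have P0: "Phi xhat = L xhat y0" unfolding y0_def by (rule PhiEq)
    have Ph: "Phi (xhat + h) = L (xhat + h) yh" unfolding yh_def by (rule PhiEq)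
    have sq0: "0 \<le> sqrt (8 * Lhat * norm h / mu)" using Lhat0 mu_pos by simp
    have dist_y: "norm (yh - y0) \<le> sqrt (8 * Lhat * norm h / mu)"
    proof -
      have q: "L xhat y0 - L xhat yh \<ge> mu / 4 * (norm (yh - y0))\<^sup>2" using QG[OF yhY y0Y y0m] .
      have l1: "\<bar>L xhat y0 - L (xhat + h) y0\<bar> \<le> Lhat * norm h"
        using Lip[of xhat y0 "xhat + h" y0] by simp
      have l2: "\<bar>L xhat yh - L (xhat + h) yh\<bar> \<le> Lhat * norm h"
        using Lip[of xhat yh "xhat + h" yh] by simp
      have "L (xhat + h) y0 \<le> L (xhat + h) yh" using yhm y0Y by blast
      then have "mu / 4 * (norm (yh - y0))\<^sup>2 \<le> 2 * (Lhat * norm h)" using q l1 l2 by linarith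
      then have "(norm (yh - y0))\<^sup>2 \<le> 8 * Lhat * norm h / mu" using mu_pos by (simp add: field_simps)
      then have "sqrt ((norm (yh - y0))\<^sup>2) \<le> sqrt (8 * Lhat * norm h / mu)" by (rule real_sqrt_le_mono)
      then show ?thesis by simp
    qed
    have up: "Phi (xhat + h) - Phi xhat - inner h G0 \<le> norm h * (ellhat * norm h + ellhat * sqrt (8 * Lhat * norm h / mu))"
    proof -
      have t: "L (xhat + h) yh - L xhat yh - inner h (Gv xhat yh) \<le> ellhat * (norm h)\<^sup>2" using T[of xhat h yh] by linarith
      have "L xhat yh \<le> L xhat y0" using y0m yhY by blast
      have "inner h (Gv xhat yh - G0) \<le> norm h * norm (Gv xhat yh - G0)" by (rule norm_cauchy_schwarz)
      also have "\<dots> \<le> norm h * (ellhat * norm (yh - y0))" unfolding G0_def by (rule mult_left_mono[OF Gl norm_ge_zero])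
      also have "\<dots> \<le> norm h * (ellhat * sqrt (8 * Lhat * norm h / mu))"
        by (intro mult_left_mono dist_y ellhat0 norm_ge_zero)
      finally have c: "inner h (Gv xhat yh) - inner h G0 \<le> norm h * (ellhat * sqrt (8 * Lhat * norm h / mu))"
        by (simp add: inner_diff_right)
      have "Phi (xhat + h) - Phi xhat - inner h G0 \<le> ellhat * (norm h)\<^sup>2 + norm h * (ellhat * sqrt (8 * Lhat * norm h / mu))"
        using t c \<open>L xhat yh \<le> L xhat y0\<close> P0 Ph by linarith
      then show ?thesis by (simp add: power2_eq_square algebra_simps)
    qed
    have lo: "Phi (xhat + h) - Phi xhat - inner h G0 \<ge> - (norm h * (ellhat * norm h + ellhat * sqrt (8 * Lhat * norm h / mu)))"
    proof -
      have t: "L (xhat + h) y0 - L xhat y0 - inner h G0 \<ge> - (ellhat * (norm h)\<^sup>2)" using T[of xhat h y0] unfolding G0_def by linarith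
      have "L (xhat + h) y0 \<le> Phi (xhat + h)" using yhm y0Y Ph by simp
      then have "Phi (xhat + h) - Phi xhat - inner h G0 \<ge> - (ellhat * (norm h)\<^sup>2)" using t P0 by linarith
      moreover have "0 \<le> norm h * (ellhat * sqrt (8 * Lhat * norm h / mu))" using ellhat0 sq0 by simp
      ultimately show ?thesis by (simp add: power2_eq_square algebra_simps)
    qed
    show "\<bar>Phi (xhat + h) - Phi xhat - inner h (Gv xhat (ys xhat))\<bar> \<le> norm h * (ellhat * norm h + ellhat * sqrt (8 * Lhat * norm h / mu))"
      using up lo unfolding G0_def y0_def by (simp add: abs_le_iff)
  next
    have n: "((\<lambda>h. norm h) \<longlongrightarrow> 0) (at (0::real^'n))"
      using tendsto_norm_zero[OF tendsto_ident_at[of "0::real^'n" UNIV]] by simp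
    have "((\<lambda>h. ellhat * norm h + ellhat * sqrt (8 * Lhat * norm h / mu)) \<longlongrightarrow> ellhat * 0 + ellhat * sqrt (8 * Lhat * 0 / mu)) (at (0::real^'n))"
      using mu_pos by (intro tendsto_intros n) simp
    then show "((\<lambda>h. ellhat * norm h + ellhat * sqrt (8 * Lhat * norm h / mu)) \<longlongrightarrow> 0) (at (0::real^'n))" by simp
  qed
  show ?thesis
  proof -
    define v where "v = grad Phi xhat"
    define m where "m = min delta_k 1"
    define M where "M = max delta_max 1"
    define s where "s = (- (delta_k / norm g)) *\<^sub>R g"
    define st where "st = (- (delta_k / norm v)) *\<^sub>R v"
    have vE: "v = Gv xhat (ys xhat)" unfolding v_def by (rule grad_unique[OF Dk])
    have gE: "g = Gv xhat (yi xhat)"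
      unfolding g_def using grad_unique[OF GD[where x=xhat and y="yi xhat"]] unfolding L_def .
    have v0: "v \<noteq> 0" using gPhi_ne unfolding v_def .
    have ng: "norm g > 0" using g_ne by simp
    have nv: "norm v > 0" using v0 by simp
    have m0: "0 < m" unfolding m_def using delta by simp
    have m1: "m \<le> 1" unfolding m_def by simp
    have dmM: "delta_k \<le> m * M" unfolding m_def M_def using delta
      by (cases "delta_k \<le> 1") (auto simp: min_def max_def)
    have M0: "0 < M" unfolding M_def by simp
    have xin: "xhat \<in> cball xhat delta_k" using delta by simp
    have ye: "norm (yi xhat - ys xhat) \<le> eps" using yi_close[OF xin] .
    have eps0: "0 \<le> eps" using ye norm_ge_zero order_trans by blast
    have gv: "norm (g - v) \<le> ellhat * eps"
    proof -
      have "norm (g - v) \<le> ellhat * norm (yi xhat - ys xhat)" unfolding gE vE by (rule Gl)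
      also have "\<dots> \<le> ellhat * eps" using ye ellhat0 by (rule mult_left_mono)
      finally show ?thesis .
    qed
    have A1: "L xhat (yi xhat) \<ge> Phi xhat - Lhat * eps"
    proof -
      have "\<bar>L xhat (yi xhat) - L xhat (ys xhat)\<bar> \<le> Lhat * norm (xhat - xhat) + L1 * norm (yi xhat - ys xhat)" by (rule Lip)
      also have "\<dots> \<le> L1 * eps" using ye L10 by (simp add: mult_left_mono)
      also have "\<dots> \<le> Lhat * eps" using L1Lhat eps0 by (rule mult_right_mono)
      finally show ?thesis using PhiEq[of xhat] by linarith
    qed
    have ns: "norm s = delta_k" unfolding s_def using ng delta by simp
    have sin: "xhat + s \<in> cball xhat delta_k" using ns by (simp add: dist_norm)
    have A2: "L (xhat + s) (yi (xhat + s)) \<le> Phi (xhat + s)"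
      using YS[of "xhat + s"] yi_maps[OF sin] PhiEq[of "xhat + s"] by auto
    have A3: "Phi (xhat + s) \<le> Phi (xhat + st) + Lhat * norm (s - st)"
      using PhiLip[of "xhat + s" "xhat + st"] by (simp add: abs_le_iff)
    have A4: "norm (s - st) \<le> delta_k * (2 * (ellhat * eps) / norm g)"
    proof -
      have "s - st = delta_k *\<^sub>R ((1 / norm v) *\<^sub>R v - (1 / norm g) *\<^sub>R g)"
        unfolding s_def st_def by (simp add: algebra_simps)
      then have "norm (s - st) = delta_k * norm ((1 / norm v) *\<^sub>R v - (1 / norm g) *\<^sub>R g)"
        using delta by simp
      also have "\<dots> \<le> delta_k * (2 * norm (v - g) / norm g)"
        using unit_diff[OF v0 g_ne] delta by (intro mult_left_mono) simp_all
      also have "\<dots> \<le> delta_k * (2 * (ellhat * eps) / norm g)"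
        using gv ng delta by (intro mult_left_mono divide_right_mono) (simp_all add: norm_minus_commute)
      finally show ?thesis .
    qed
    have A5: "Phi xhat - Phi (xhat + st) \<ge> kt * norm v * m"
      using dcp unfolding st_def v_def m_def .
    have A6: "norm v \<ge> norm g / 2"
    proof -
      have "norm g \<le> norm v + norm (g - v)" by (metis norm_triangle_sub add.commute)
      then show ?thesis using gv eps1 by (simp add: algebra_simps)
    qed
    have K1: "Lhat * (delta_k * (2 * (ellhat * eps) / norm g)) \<le> kt * norm v * m / 4"
    proof -
      have "Lhat * (delta_k * (2 * (ellhat * eps) / norm g)) = (delta_k / (4 * M * norm g)) * (eps * (8 * Lhat * ellhat * M))"
        using M0 ng by (simp add: field_simps)
      also have "\<dots> \<le> (delta_k / (4 * M * norm g)) * (norm v * norm g * kt)"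
        using eps2 delta M0 ng by (intro mult_left_mono) (simp_all add: M_def v_def)
      also have "\<dots> = delta_k * (norm v * kt) / (4 * M)" using ng by (simp add: field_simps)
      also have "\<dots> \<le> (m * M) * (norm v * kt) / (4 * M)"
        using dmM nv kt_pos M0 by (intro divide_right_mono mult_right_mono) simp_all
      also have "\<dots> = kt * norm v * m / 4" using M0 by (simp add: field_simps)
      finally show ?thesis .
    qed
    have K2: "Lhat * eps \<le> norm g * m * kt / 16" using eps3 unfolding m_def by (simp add: field_simps)
    have K3: "kt * norm v * m \<ge> kt * (norm g / 2) * m"
      using A6 kt_pos m0 by (intro mult_right_mono mult_left_mono) simp_all
    have fin: "L xhat (yi xhat) - L (xhat + s) (yi (xhat + s)) \<ge> kt / 8 * norm g * m"
    proof -
      have e1: "kt * (norm g / 2) * m = (kt * norm g * m) / 2" by simp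
      have e2: "norm g * m * kt / 16 = (kt * norm g * m) / 16" by simp
      have e3: "kt / 8 * norm g * m = (kt * norm g * m) / 8" by simp
      have "Lhat * norm (s - st) \<le> Lhat * (delta_k * (2 * (ellhat * eps) / norm g))"
        using A4 Lhat0 by (rule mult_left_mono)
      moreover have "0 \<le> kt * norm g * m" using kt_pos m0 by simp
      ultimately show ?thesis unfolding e3
        by (intro fin_aux[OF _ A1 A2 A3 A5 K1]) (use K2 K3 e1 e2 in simp_all)
    qed
    show ?thesis using fin unfolding s_def m_def .
  qed
qed

end
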